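(* Let $\sigma$ be a completely erasing $k$-block substitution with $w_\epsilon\ne1^k$ that satisfies the optimality condition. Suppose the vanishing order satisfies $$\lim_{|w|\to\infty}\frac{|w|}{\epsilon(w)}=\infty,$$ meaning that for every $M>0$ there is $N$ such that $|w|/\epsilon(w)>M$ for all $w\in\{0,1\}^*$ with $|w|>N$. Then $f_\sigma$ has infinite topological entropy.
   Context: Notation: $\mathbb I=[0,1]$. $\{0,1\}^*$ and $\{0,1\}^\omega$ denote finite and infinite binary words, and $\epsilon$ is the empty word. For a word $w$, set $0.w=\sum_iw_i2^{-i}$. For $x\in(0,1]$, $\widetilde x$ is the unique infinite binary expansion of $x$ not ending in $0^\infty$. Fix $k\ge2$. An erasing $k$-block substitution is a map $\sigma:\{0,1\}^k\to\{0,1\}^*$ with exactly one block $w_\epsilon$ such that $\sigma(w_\epsilon)=\epsilon$. $\sigma$ is alternating if there are $\sigma_1,\dots,\sigma_k:\{0,1\}\to\{0,1\}^*$ with $\sigma(b_1\cdots b_k)=\sigma_1(b_1)\cdots\sigma_k(b_k)$. It is then extended to all finite or infinite words by $\sigma(u)=\prod_j\sigma_{((j-1)\bmod k)+1}(u_j)$. $\sigma$ is completely erasing if it is erasing and alternating, and every $w\in\{0,1\}^*$ satisfies $\sigma^n(w)=\epsilon$ for some $n\in\mathbb N$. The least such $n$ is the vanishing order $\epsilon(w)$. The map $f_\sigma:\mathbb I\to\mathbb I$ is defined by $f_\sigma(x)=0.\sigma(\widetilde x)$ if $x\in(0,1]$ and $\widetilde x\neq w_\epsilon^\infty$, and $f_\sigma(x)=0$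 otherwise. Optimality condition: every $w\in\{0,1\}^\omega$ can be written as $w=\prod_{i\ge1}\sigma(b_i)$ with blocks $b_i\in\{0,1\}^k$ satisfying $\sigma(b_i)\ne\epsilon$. Topological entropy (Bowen–Dinaburg, for a possibly discontinuous $f$): let $d_n(x,y)=\max_{0\le i\le n}|f^i(x)-f^i(y)|$. A set $S$ is $(n,\delta)$-separated if $d_n(x,y)\ge\delta$ for all distinct $x,y\in S$. Let $s(n,\delta)$ be the maximal cardinality of an $(n,\delta)$-separated subset of $\mathbb I$. Then $h(f)=\lim_{\delta\to0}\limsup_{n\to\infty}\frac1n\log s(n,\delta)$. *)

theory Defs
  imports "HOL-Analysis.Analysis"
begin

text \<open>Binary words: finite words are bool lists (True = 1, False = 0),
infinite words are functions nat => bool (position n is the (n+1)-th letter).\<close>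

definition bval :: "bool list \<Rightarrow> real" where
  "bval w = (\<Sum>i<length w. (if w ! i then 1 else 0) / 2 ^ (Suc i))"

definition ival :: "(nat \<Rightarrow> bool) \<Rightarrow> real" where
  "ival w = (\<Sum>n. (if w n then 1 else 0) / 2 ^ (Suc n))"

definition tilde :: "real \<Rightarrow> (nat \<Rightarrow> bool)" where
  "tilde x = (THE w. ival w = x \<and> (\<forall>N. \<exists>n\<ge>N. w n))"

text \<open>Concatenation of an infinite sequence of finite words; if the result
is a finite word it is padded with zeros (which does not change its binary value).\<close>
definition iconcat :: "(nat \<Rightarrow> bool list) \<Rightarrow> nat \<Rightarrow> bool" where
  "iconcat u n =
     (if \<exists>m. n < length (concat (map u [0..<m]))
      then concat (map u [0..<(LEAST m. n < length (concat (map u [0..<m])))]) ! n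
      else False)"

text \<open>An alternating k-block substitution is given by its components
s 0, ..., s (k-1) (the paper's sigma_1, ..., sigma_k).  Its extension to finite words:\<close>
definition sub :: "(nat \<Rightarrow> bool \<Rightarrow> bool list) \<Rightarrow> nat \<Rightarrow> bool list \<Rightarrow> bool list" where
  "sub s k w = concat (map (\<lambda>j. s (j mod k) (w ! j)) [0..<length w])"

definition isub :: "(nat \<Rightarrow> bool \<Rightarrow> bool list) \<Rightarrow> nat \<Rightarrow> (nat \<Rightarrow> bool) \<Rightarrow> (nat \<Rightarrow> bool)" where
  "isub s k x = iconcat (\<lambda>j. s (j mod k) (x j))"

definition erasing :: "(nat \<Rightarrow> bool \<Rightarrow> bool list) \<Rightarrow> nat \<Rightarrow> bool" where
  "erasing s k \<longleftrightarrow> (\<exists>!b. length b = k \<and> sub s k b = [])"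

definition eblock :: "(nat \<Rightarrow> bool \<Rightarrow> bool list) \<Rightarrow> nat \<Rightarrow> bool list" where
  "eblock s k = (THE b. length b = k \<and> sub s k b = [])"

definition completely_erasing :: "(nat \<Rightarrow> bool \<Rightarrow> bool list) \<Rightarrow> nat \<Rightarrow> bool" where
  "completely_erasing s k \<longleftrightarrow> erasing s k \<and> (\<forall>w. \<exists>n. (sub s k ^^ n) w = [])"

definition vanishing_order :: "(nat \<Rightarrow> bool \<Rightarrow> bool list) \<Rightarrow> nat \<Rightarrow> bool list \<Rightarrow> nat" where
  "vanishing_order s k w = (LEAST n. (sub s k ^^ n) w = [])"

definition optimal :: "(nat \<Rightarrow> bool \<Rightarrow> bool list) \<Rightarrow> nat \<Rightarrow> bool" where
  "optimal s k \<longleftrightarrow>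
     (\<forall>w :: nat \<Rightarrow> bool. \<exists>b :: nat \<Rightarrow> bool list.
        (\<forall>i. length (b i) = k \<and> sub s k (b i) \<noteq> []) \<and>
        w = iconcat (\<lambda>i. sub s k (b i)))"

definition fsigma :: "(nat \<Rightarrow> bool \<Rightarrow> bool list) \<Rightarrow> nat \<Rightarrow> real \<Rightarrow> real" where
  "fsigma s k x =
     (if 0 < x \<and> x \<le> 1 \<and> tilde x \<noteq> (\<lambda>n. eblock s k ! (n mod k))
      then ival (isub s k (tilde x)) else 0)"

text \<open>Bowen--Dinaburg topological entropy of a (possibly discontinuous) map on [0,1].\<close>
definition dn :: "(real \<Rightarrow> real) \<Rightarrow> nat \<Rightarrow> real \<Rightarrow> real \<Rightarrow> real" where
  "dn f n x y = Max ((\<lambda>i. \<bar>(f ^^ i) x - (f ^^ i) y\<bar>) ` {0..n})"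

definition separated :: "(real \<Rightarrow> real) \<Rightarrow> nat \<Rightarrow> real \<Rightarrow> real set \<Rightarrow> bool" where
  "separated f n \<delta> S \<longleftrightarrow> S \<subseteq> {0..1} \<and> (\<forall>x\<in>S. \<forall>y\<in>S. x \<noteq> y \<longrightarrow> dn f n x y \<ge> \<delta>)"

definition sep_num :: "(real \<Rightarrow> real) \<Rightarrow> nat \<Rightarrow> real \<Rightarrow> nat" where
  "sep_num f n \<delta> = Sup {card S | S. finite S \<and> separated f n \<delta> S}"

definition htop :: "(real \<Rightarrow> real) \<Rightarrow> ereal" where
  "htop f = Lim (at_right 0)
     (\<lambda>\<delta>. limsup (\<lambda>n. ereal (ln (real (sep_num f n \<delta>)) / real n)))"

end

theory Submission
  imports Defs
begin


definition cv :: "(nat \<Rightarrow> bool) \<Rightarrow> nat \<Rightarrow> real" where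
  "cv x n = (if x n then 1 else 0) / 2 ^ (Suc n)"

lemma cv_nonneg: "0 \<le> cv x n" by (simp add: cv_def)
lemma cv_le: "cv x n \<le> (1/2) ^ Suc n" by (simp add: cv_def power_divide)

lemma geo_tail: "(\<Sum>n. ((1::real)/2) ^ Suc (n + j)) = 1 / 2 ^ j"
proof -
  have "(\<lambda>n. ((1::real)/2) ^ Suc (n + j)) = (\<lambda>n. (1/2)^(Suc j) * (1/2)^n)"
    by (simp add: power_add mult.commute)
  moreover have "(\<Sum>n. ((1::real)/2)^(Suc j) * (1/2)^n) = (1/2)^(Suc j) * 2"
    using suminf_geometric[of "1/2::real"] by (subst suminf_mult) auto
  ultimately show ?thesis by (simp add: power_divide)
qed

lemma summable_geo_tail: "summable (\<lambda>n. ((1::real)/2) ^ Suc (n + j))"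
proof -
  have "summable (\<lambda>n. ((1::real)/2)^(Suc j) * (1/2)^n)"
    by (intro summable_mult summable_geometric) auto
  moreover have "(\<lambda>n. ((1::real)/2) ^ Suc (n + j)) = (\<lambda>n. (1/2)^(Suc j) * (1/2)^n)"
    by (simp add: power_add mult.commute)
  ultimately show ?thesis by simp
qed

lemma summable_cv: "summable (\<lambda>n. cv x (n + j))"
  by (rule summable_comparison_test'[OF summable_geo_tail[of j]])
     (metis cv_le cv_nonneg real_norm_def abs_of_nonneg)

lemma ival_cv: "ival x = (\<Sum>n. cv x n)" by (simp add: ival_def cv_def)

definition tl_s :: "(nat \<Rightarrow> bool) \<Rightarrow> nat \<Rightarrow> real" where
  "tl_s x j = (\<Sum>n. cv x (n + j))"

lemma tl_s_nonneg: "0 \<le> tl_s x j"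
  unfolding tl_s_def by (rule suminf_nonneg[OF summable_cv]) (simp add: cv_nonneg)

lemma tl_s_le: "tl_s x j \<le> 1 / 2 ^ j"
  unfolding tl_s_def geo_tail[of j, symmetric]
  by (rule suminf_le[OF _ summable_cv summable_geo_tail]) (metis cv_le)

lemma tl_s_ge: assumes "x q" "j \<le> q" shows "1 / 2 ^ Suc q \<le> tl_s x j"
proof -
  have "sum (\<lambda>n. cv x (n + j)) {q - j} \<le> tl_s x j"
    unfolding tl_s_def by (rule sum_le_suminf[OF summable_cv]) (auto simp: cv_nonneg)
  thus ?thesis using assms by (simp add: cv_def)
qed

lemma tl_s_le0: assumes "\<not> x q" "j \<le> q" shows "tl_s x j \<le> 1 / 2 ^ j - 1 / 2 ^ Suc q"
proof -
  let ?g = "\<lambda>n. ((1::real)/2) ^ Suc (n + j) - cv x (n + j)"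
  have sg: "summable ?g" by (intro summable_diff summable_geo_tail summable_cv)
  have "sum ?g {q - j} \<le> suminf ?g"
    by (rule sum_le_suminf[OF sg], simp, metis cv_le diff_ge_0_iff_ge)
  moreover have "sum ?g {q - j} = 1 / 2 ^ Suc q" using assms by (simp add: cv_def power_divide)
  moreover have "suminf ?g = 1 / 2 ^ j - tl_s x j"
    unfolding tl_s_def using suminf_diff[OF summable_geo_tail summable_cv] geo_tail by simp
  ultimately show ?thesis by simp
qed

lemma ival_split: "ival x = (\<Sum>n<j. cv x n) + tl_s x j"
  unfolding ival_cv tl_s_def using suminf_split_initial_segment[OF summable_cv[of x 0], of j] by simp

lemma tl_s_head: "tl_s x j = cv x j + tl_s x (Suc j)"
proof -
  have "tl_s x (Suc j) = tl_s x j - cv x j"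
    unfolding tl_s_def using suminf_split_head[OF summable_cv[of x j]] by simp
  thus ?thesis by simp
qed

lemma ival_compare:
  assumes agree: "\<And>n. n < i \<Longrightarrow> x n = y n" and "\<not> x i" "y i"
  shows "ival y - ival x = 1 / 2 ^ Suc i + tl_s y (Suc i) - tl_s x (Suc i)"
proof -
  have "(\<Sum>n<i. cv x n) = (\<Sum>n<i. cv y n)" using agree by (intro sum.cong) (auto simp: cv_def)
  thus ?thesis using ival_split[of x i] ival_split[of y i] tl_s_head[of x i] tl_s_head[of y i]
      assms by (simp add: cv_def)
qed

definition infones :: "(nat \<Rightarrow> bool) \<Rightarrow> bool" where
  "infones x \<longleftrightarrow> (\<forall>N. \<exists>n\<ge>N. x n)"

lemma ival_range: "0 \<le> ival x" "ival x \<le> 1"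
  using ival_split[of x 0] tl_s_nonneg[of x 0] tl_s_le[of x 0] by auto

lemma ival_pos: "infones x \<Longrightarrow> 0 < ival x"
  using ival_split[of x 0] tl_s_ge[of x _ 0] unfolding infones_def
  by (metis le0 lessThan_0 order_less_le_trans sum.empty add_0 zero_less_divide_1_iff zero_less_numeral zero_less_power)

lemma first_diff:
  fixes x y :: "nat \<Rightarrow> 'b"
  assumes "x \<noteq> y"
  obtains i where "\<And>n. n < i \<Longrightarrow> x n = y n" "x i \<noteq> y i"
proof -
  from assms obtain j where "x j \<noteq> y j" by auto
  let ?i = "LEAST i. x i \<noteq> y i"
  have "x ?i \<noteq> y ?i" using LeastI_ex[of "\<lambda>i. x i \<noteq> y i"] \<open>x j \<noteq> y j\<close> by blast
  moreover have "\<And>n. n < ?i \<Longrightarrow> x n = y n" using not_less_Least by blast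
  ultimately show ?thesis using that by blast
qed

lemma ival_inj_aux:
  assumes agree: "\<And>n. n < i \<Longrightarrow> x n = y n" and "\<not> x i" "y i" and "infones y"
  shows "ival x < ival y"
proof -
  obtain q where q: "q \<ge> Suc i" "y q" using assms(4) unfolding infones_def by blast
  have "1 / 2 ^ Suc q \<le> tl_s y (Suc i)" using tl_s_ge[of y q "Suc i", OF q(2) q(1)] .
  moreover have "(0::real) < 1 / 2 ^ Suc q" by simp
  moreover have "tl_s x (Suc i) \<le> 1 / 2 ^ Suc i" by (rule tl_s_le)
  moreover have "ival y - ival x = 1 / 2 ^ Suc i + tl_s y (Suc i) - tl_s x (Suc i)"
    by (rule ival_compare) (use assms in auto)
  ultimately show ?thesis by linarith
qed

lemma ival_inj: assumes "infones x" "infones y" "ival x = ival y" shows "x = y"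
proof (rule ccontr)
  assume "x \<noteq> y"
  then obtain i where a: "\<And>n. n < i \<Longrightarrow> x n = y n" "x i \<noteq> y i" using first_diff[OF \<open>x \<noteq> y\<close>] by blast
  show False
  proof (cases "x i")
    case True
    then have "ival y < ival x" using ival_inj_aux[of i y x] a assms by (metis)
    then show False using assms by simp
  next
    case False
    then have "ival x < ival y" using ival_inj_aux[of i x y] a assms by metis
    then show False using assms by simp
  qed
qed

lemma tilde_ival: assumes "infones x" shows "tilde (ival x) = x"
  unfolding tilde_def
proof (rule the_equality)
  show "ival x = ival x \<and> (\<forall>N. \<exists>n\<ge>N. x n)" using assms by (simp add: infones_def)
next
  fix w assume "ival w = ival x \<and> (\<forall>N. \<exists>n\<ge>N. w n)"
  thus "w = x" using ival_inj[of w x] assms by (auto simp: infones_def)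
qed

lemma ival_sep:
  assumes "\<And>n. n < i \<Longrightarrow> x n = y n" "\<not> x i" "y i" "i < p" "\<not> x p"
  shows "1 / 2 ^ Suc p \<le> ival y - ival x"
proof -
  have "tl_s x (Suc i) \<le> 1 / 2 ^ Suc i - 1 / 2 ^ Suc p" using tl_s_le0[of x p "Suc i"] assms by simp
  moreover have "ival y - ival x = 1 / 2 ^ Suc i + tl_s y (Suc i) - tl_s x (Suc i)"
    by (rule ival_compare) (use assms in auto)
  ultimately show ?thesis using tl_s_nonneg[of y "Suc i"] by linarith
qed



definition pre :: "bool list \<Rightarrow> (nat \<Rightarrow> bool) \<Rightarrow> nat \<Rightarrow> bool" where
  "pre w y n = (if n < length w then w ! n else y (n - length w))"

lemma pre_Nil[simp]: "pre [] y = y" by (simp add: pre_def fun_eq_iff)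

lemma pre_append: "pre (a @ b) y = pre a (pre b y)"
  by (auto simp: pre_def fun_eq_iff nth_append)

lemma iconcat_K:
  assumes "n < length (concat (map u [0..<m]))"
  shows "iconcat u n = concat (map u [0..<m]) ! n"
proof -
  let ?P = "\<lambda>m. n < length (concat (map u [0..<m]))"
  let ?m0 = "LEAST m. ?P m"
  have ex: "\<exists>m. ?P m" using assms by blast
  have P0: "?P ?m0" using LeastI_ex[OF ex] .
  have le: "?m0 \<le> m" using Least_le[of ?P m] assms by blast
  have "[0..<m] = [0..<?m0] @ [?m0..<m]" using le upt_add_eq_append[of 0 ?m0 "m - ?m0"] by simp
  hence "concat (map u [0..<m]) = concat (map u [0..<?m0]) @ concat (map u [?m0..<m])" by simp
  hence "concat (map u [0..<m]) ! n = concat (map u [0..<?m0]) ! n" using P0 by (simp add: nth_append)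
  thus ?thesis unfolding iconcat_def using ex by simp
qed

lemma iconcat_none:
  assumes "\<forall>m. \<not> n < length (concat (map u [0..<m]))"
  shows "\<not> iconcat u n"
  using assms unfolding iconcat_def by simp

lemma concat_upt_Suc0: "concat (map u [0..<Suc m]) = u 0 @ concat (map (\<lambda>i. u (Suc i)) [0..<m])"
  by (induction m) auto

lemma iconcat_split1: "iconcat u = pre (u 0) (iconcat (\<lambda>i. u (Suc i)))"
proof
  fix n
  show "iconcat u n = pre (u 0) (iconcat (\<lambda>i. u (Suc i))) n"
  proof (cases "n < length (u 0)")
    case True
    then have "iconcat u n = concat (map u [0..<1]) ! n" by (intro iconcat_K) auto
    then show ?thesis using True by (simp add: pre_def)
  next
    case False
    show ?thesis
    proof (cases "\<exists>m. n < length (concat (map u [0..<m]))")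
      case True
      then obtain m where m: "n < length (concat (map u [0..<m]))" by blast
      with False have "m \<noteq> 0" by (cases m) auto
      then obtain m' where mm: "m = Suc m'" by (cases m) auto
      have "iconcat u n = concat (map u [0..<m]) ! n" by (rule iconcat_K[OF m])
      also have "\<dots> = concat (map (\<lambda>i. u (Suc i)) [0..<m']) ! (n - length (u 0))"
        unfolding mm concat_upt_Suc0 using False by (simp add: nth_append del: upt_Suc)
      also have "\<dots> = iconcat (\<lambda>i. u (Suc i)) (n - length (u 0))"
        using m False unfolding mm concat_upt_Suc0 by (intro iconcat_K[symmetric]) (simp del: upt_Suc)
      finally show ?thesis using False by (simp add: pre_def)
    next
      case nT: False
      have "\<forall>m. \<not> n - length (u 0) < length (concat (map (\<lambda>i. u (Suc i)) [0..<m]))"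
      proof
        fix m show "\<not> n - length (u 0) < length (concat (map (\<lambda>i. u (Suc i)) [0..<m]))"
        proof
          assume "n - length (u 0) < length (concat (map (\<lambda>i. u (Suc i)) [0..<m]))"
          then have "n < length (concat (map u [0..<Suc m]))" using False
            unfolding concat_upt_Suc0 by (simp del: upt_Suc)
          then show False using nT by blast
        qed
      qed
      then have a: "\<not> iconcat (\<lambda>i. u (Suc i)) (n - length (u 0))" by (rule iconcat_none)
      have b: "\<not> iconcat u n" using nT by (intro iconcat_none) blast
      show ?thesis using a b False by (simp add: pre_def)
    qed
  qed
qed

lemma iconcat_split: "iconcat u = pre (concat (map u [0..<a])) (iconcat (\<lambda>i. u (i + a)))"
proof (induction a)
  case 0 then show ?case by simp
next
  case (Suc a)
  have "iconcat (\<lambda>i. u (i + a)) = pre (u a) (iconcat (\<lambda>i. u (i + Suc a)))"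
    using iconcat_split1[of "\<lambda>i. u (i + a)"] by simp
  with Suc show ?case by (simp add: pre_append)
qed

definition isubp :: "(nat \<Rightarrow> bool \<Rightarrow> bool list) \<Rightarrow> nat \<Rightarrow> nat \<Rightarrow> (nat \<Rightarrow> bool) \<Rightarrow> nat \<Rightarrow> bool" where
  "isubp s k r y = iconcat (\<lambda>j. s ((j + r) mod k) (y j))"

definition subp :: "(nat \<Rightarrow> bool \<Rightarrow> bool list) \<Rightarrow> nat \<Rightarrow> nat \<Rightarrow> bool list \<Rightarrow> bool list" where
  "subp s k r w = concat (map (\<lambda>j. s ((j + r) mod k) (w ! j)) [0..<length w])"

lemma isub_p: "isub s k = isubp s k 0" by (simp add: isub_def isubp_def fun_eq_iff)
lemma sub_p: "sub s k = subp s k 0" by (simp add: sub_def subp_def fun_eq_iff)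

lemma isubp_mod: "r mod k = r' mod k \<Longrightarrow> isubp s k r = isubp s k r'"
  unfolding isubp_def by (simp add: mod_add_right_eq[symmetric, of _ r] mod_add_right_eq[symmetric, of _ r'] )

lemma isubp_pre: "isubp s k r (pre w y) = pre (subp s k r w) (isubp s k (r + length w) y)"
proof -
  have "isubp s k r (pre w y) = pre (concat (map (\<lambda>j. s ((j + r) mod k) (pre w y j)) [0..<length w]))
     (iconcat (\<lambda>i. s ((i + length w + r) mod k) (pre w y (i + length w))))"
    unfolding isubp_def by (rule iconcat_split)
  also have "concat (map (\<lambda>j. s ((j + r) mod k) (pre w y j)) [0..<length w]) = subp s k r w"
    unfolding subp_def by (intro arg_cong[where f=concat] map_cong) (auto simp: pre_def)
  also have "(\<lambda>i. s ((i + length w + r) mod k) (pre w y (i + length w))) = (\<lambda>i. s ((i + (r + length w)) mod k) (y i))"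
  proof
    fix i
    have e: "i + length w + r = i + (r + length w)" by simp
    show "s ((i + length w + r) mod k) (pre w y (i + length w)) = s ((i + (r + length w)) mod k) (y i)"
      unfolding e by (simp add: pre_def)
  qed
  finally show ?thesis unfolding isubp_def .
qed

lemma iconcat_nil: assumes "\<And>j. u j = []" shows "iconcat u = (\<lambda>_. False)"
proof
  fix n
  have "\<forall>m. concat (map u [0..<m]) = []" using assms by simp
  then show "iconcat u n = False" using iconcat_none[of n u] by (metis length_0_conv less_zeroE)
qed

lemma concat_group:
  "concat (map (\<lambda>i. concat (map u [i*k..<i*k+k])) [0..<m]) = concat (map u [0..<m*k])"
proof (induction m)
  case 0 then show ?case by simp
next
  case (Suc m)
  have "[0..<Suc m * k] = [0..<m*k] @ [m*k..<m*k+k]" using upt_add_eq_append[of 0 "m*k" k] by (simp add: add.commute)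
  with Suc show ?case by simp
qed

lemma len_concat_mono: "m \<le> m' \<Longrightarrow> length (concat (map u [0..<m])) \<le> length (concat (map u [0..<m']))"
proof -
  assume "m \<le> m'"
  then have "[0..<m'] = [0..<m] @ [m..<m']" using upt_add_eq_append[of 0 m "m' - m"] by simp
  thus ?thesis by simp
qed

lemma iconcat_group:
  assumes "k > 0"
  shows "iconcat u = iconcat (\<lambda>i. concat (map u [i*k..<i*k+k]))"
proof
  fix n
  let ?v = "\<lambda>i. concat (map u [i*k..<i*k+k])"
  show "iconcat u n = iconcat ?v n"
  proof (cases "\<exists>m. n < length (concat (map ?v [0..<m]))")
    case True
    then obtain m where m: "n < length (concat (map ?v [0..<m]))" by blast
    then show ?thesis using iconcat_K[OF m] iconcat_K[of n u "m*k"] by (simp add: concat_group)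
  next
    case False
    have "\<forall>m. \<not> n < length (concat (map u [0..<m]))"
    proof
      fix m
      have "length (concat (map u [0..<m])) \<le> length (concat (map u [0..<m*k]))"
        using assms by (intro len_concat_mono) simp
      moreover have "\<not> n < length (concat (map ?v [0..<m]))" using False by blast
      ultimately show "\<not> n < length (concat (map u [0..<m]))" by (simp add: concat_group)
    qed
    then show ?thesis using iconcat_none False iconcat_none[of n ?v] by blast
  qed
qed



definition EP :: "(nat \<Rightarrow> bool) \<Rightarrow> bool" where
  "EP x \<longleftrightarrow> (\<exists>N p. 0 < p \<and> (\<forall>n\<ge>N. x (n + p) = x n))"

lemma EP_pre: assumes "EP v" shows "EP (pre w v)"
proof -
  obtain N p where Np: "0 < p" "\<forall>n\<ge>N. v (n + p) = v n" using assms unfolding EP_def by blast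
  have "\<forall>n\<ge>N + length w. pre w v (n + p) = pre w v n"
  proof (intro allI impI)
    fix n assume n: "N + length w \<le> n"
    have e: "n + p - length w = (n - length w) + p" using n by simp
    have "n - length w \<ge> N" using n by simp
    then have "v ((n - length w) + p) = v (n - length w)" using Np(2) by blast
    then show "pre w v (n + p) = pre w v n" using n unfolding pre_def e by simp
  qed
  then show ?thesis using Np unfolding EP_def by blast
qed

lemma EP_pre_rev: assumes "EP (pre w v)" shows "EP v"
proof -
  obtain N p where Np: "0 < p" "\<forall>n\<ge>N. pre w v (n + p) = pre w v n" using assms unfolding EP_def by blast
  have "\<forall>n\<ge>N. v (n + p) = v n"
  proof (intro allI impI)
    fix n assume n: "N \<le> n"
    have "pre w v ((n + length w) + p) = pre w v (n + length w)" using Np n by simp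
    moreover have "(n + length w) + p = (n + p) + length w" by simp
    ultimately show "v (n + p) = v n" by (simp add: pre_def)
  qed
  then show ?thesis using Np unfolding EP_def by blast
qed

lemma not_EP_infones: "\<not> EP x \<Longrightarrow> infones x"
proof -
  assume a: "\<not> EP x"
  show "infones x" unfolding infones_def
  proof
    fix N show "\<exists>n\<ge>N. x n"
    proof (rule ccontr)
      assume "\<not> (\<exists>n\<ge>N. x n)"
      then have "\<forall>n\<ge>N. x (n + 1) = x n" by auto
      then show False using a unfolding EP_def by blast
    qed
  qed
qed

lemma periodic_mult: fixes p q n :: nat assumes "\<forall>n. y (n + p) = (y n :: bool)" shows "y (n + q * p) = y n"
proof (induction q)
  case 0 then show ?case by simp
next
  case (Suc q)
  have "n + Suc q * p = (n + q * p) + p" by simp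
  then show ?case using assms Suc by metis
qed

lemma EP_isubp: assumes "k > 0" "EP y" shows "EP (isubp s k r y)"
proof -
  obtain N p where Np: "0 < p" "\<forall>n\<ge>N. y (n + p) = y n" using assms unfolding EP_def by blast
  define y' where "y' = (\<lambda>n. y (n + N))"
  have yy: "y = pre (map y [0..<N]) y'" by (auto simp: fun_eq_iff pre_def y'_def)
  have per: "\<forall>n. y' (n + p) = y' n"
  proof
    fix n have "y ((n + N) + p) = y (n + N)" using Np by simp
    then show "y' (n + p) = y' n" by (simp add: y'_def add.commute add.left_commute)
  qed
  define P where "P = p * k"
  have Ppos: "0 < P" using Np assms by (simp add: P_def)
  have perP: "y' (n + q * P) = y' n" for n q
  proof -
    have "q * P = (q * k) * p" by (simp add: P_def)
    then show ?thesis using periodic_mult[OF per, of n "q * k"] by metis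
  qed
  define Q where "Q = map y' [0..<P]"
  have yQ: "y' = pre Q y'"
  proof
    fix n show "y' n = pre Q y' n"
    proof (cases "n < P")
      case True then show ?thesis by (simp add: pre_def Q_def)
    next
      case False
      then have "y' n = y' ((n - P) + 1 * P)" by simp
      also have "\<dots> = y' (n - P)" by (rule perP)
      finally show ?thesis using False by (simp add: pre_def Q_def)
    qed
  qed
  define r1 where "r1 = r + N"
  define V where "V = isubp s k r1 y'"
  define A where "A = subp s k r1 Q"
  have "V = pre A (isubp s k (r1 + length Q) y')" unfolding V_def A_def
    by (subst yQ) (rule isubp_pre)
  moreover have "isubp s k (r1 + length Q) y' = V" unfolding V_def
    using isubp_mod[of "r1 + length Q" k r1 s] by (simp add: Q_def P_def)
  ultimately have VA: "V = pre A V" by simp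
  have "EP V"
  proof (cases "A = []")
    case False
    have "\<forall>n\<ge>0. V (n + length A) = V n"
    proof (intro allI impI)
      fix n show "V (n + length A) = V n" by (subst (1) VA) (simp add: pre_def)
    qed
    then show ?thesis using False unfolding EP_def by blast
  next
    case True
    have z: "\<forall>j<P. s ((j + r1) mod k) (y' j) = []"
      using True unfolding A_def subp_def Q_def by auto
    have "\<And>j. s ((j + r1) mod k) (y' j) = []"
    proof -
      fix j
      have j: "j = j mod P + (j div P) * P" by simp
      have "y' j = y' (j mod P)" using perP[of "j mod P" "j div P"] j by simp
      moreover have "(j + r1) mod k = (j mod P + r1) mod k"
      proof -
        have "j + r1 = (j mod P + r1) + k * (p * (j div P))" using j by (simp add: P_def algebra_simps)
        then show ?thesis by (metis mod_mult_self2)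
      qed
      moreover have "j mod P < P" using Ppos by simp
      ultimately show "s ((j + r1) mod k) (y' j) = []" using z by simp
    qed
    then have "V = (\<lambda>_. False)" unfolding V_def isubp_def by (rule iconcat_nil)
    then show ?thesis unfolding EP_def by (intro exI[of _ 0] exI[of _ 1]) simp
  qed
  have "isubp s k r y = pre (subp s k r (map y [0..<N])) (isubp s k (r + N) y')"
    by (subst yy) (simp add: isubp_pre)
  then show ?thesis using EP_pre[OF \<open>EP V\<close>] unfolding V_def r1_def by simp
qed

lemma NEP_witness: "\<not> EP (\<lambda>n. \<exists>m. n = 2 ^ m)"
proof
  assume "EP (\<lambda>n. \<exists>m. n = (2::nat) ^ m)"
  then obtain N p where Np: "0 < p" "\<forall>n\<ge>N. (\<exists>m. n + p = (2::nat) ^ m) = (\<exists>m. n = 2 ^ m)"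
    unfolding EP_def by blast
  define m where "m = N + p"
  have h: "N + p < 2 ^ (N + p)" by (rule less_exp)
  have m1: "N \<le> 2 ^ m" "p < 2 ^ m" using h unfolding m_def by linarith+
  then obtain q where q: "2 ^ m + p = (2::nat) ^ q" using Np by blast
  have "2 ^ m < (2::nat) ^ q" using q Np by linarith
  then have "m < q" by (metis nat_power_less_imp_less zero_less_numeral)
  then have "2 ^ Suc m \<le> (2::nat) ^ q" by (intro power_increasing) auto
  then show False using q m1 by simp
qed



lemma eblock_props: assumes "erasing s k"
  shows "length (eblock s k) = k" "sub s k (eblock s k) = []"
proof -
  have "\<exists>!b. length b = k \<and> sub s k b = []" using assms unfolding erasing_def .
  then have "length (eblock s k) = k \<and> sub s k (eblock s k) = []"
    unfolding eblock_def by (rule theI')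
  then show "length (eblock s k) = k" "sub s k (eblock s k) = []" by auto
qed

lemma eblock_comp: assumes "erasing s k" "t < k" shows "s t (eblock s k ! t) = []"
proof -
  have "concat (map (\<lambda>j. s (j mod k) (eblock s k ! j)) [0..<k]) = []"
    using eblock_props[OF assms(1)] unfolding sub_def by simp
  then have "\<forall>j\<in>set [0..<k]. s (j mod k) (eblock s k ! j) = []" by simp
  then show ?thesis using assms(2) by simp
qed

lemma fsigma_ival:
  assumes "erasing s k" "k > 0" "infones x"
  shows "fsigma s k (ival x) = ival (isub s k x)"
proof (cases "x = (\<lambda>n. eblock s k ! (n mod k))")
  case True
  have "isub s k x = (\<lambda>_. False)" unfolding isub_def True
    by (rule iconcat_nil) (simp add: eblock_comp[OF assms(1)] assms(2))
  then have "ival (isub s k x) = 0" by (simp add: ival_def)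
  moreover have "fsigma s k (ival x) = 0" unfolding fsigma_def tilde_ival[OF assms(3)] using True by simp
  ultimately show ?thesis by simp
next
  case False
  then show ?thesis using ival_pos[OF assms(3)] ival_range[of x]
    by (simp add: fsigma_def tilde_ival[OF assms(3)])
qed

lemma fsigma_iter:
  assumes "erasing s k" "k > 0" "\<forall>j<i. infones ((isub s k ^^ j) x)"
  shows "(fsigma s k ^^ i) (ival x) = ival ((isub s k ^^ i) x)"
  using assms(3)
proof (induction i)
  case 0 then show ?case by simp
next
  case (Suc i)
  then have "(fsigma s k ^^ i) (ival x) = ival ((isub s k ^^ i) x)" by simp
  then show ?case using fsigma_ival[OF assms(1,2), of "(isub s k ^^ i) x"] Suc.prems by simp
qed

lemma preimage:
  assumes "erasing s k" "k > 0" "optimal s k" "\<not> EP z"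
  shows "\<exists>y. isubp s k r y = z \<and> \<not> EP y"
proof -
  obtain b where b: "\<forall>i. length (b i) = k \<and> sub s k (b i) \<noteq> []"
    and z: "z = iconcat (\<lambda>i. sub s k (b i))"
    using assms(3) unfolding optimal_def by blast
  define y0 where "y0 = (\<lambda>n. b (n div k) ! (n mod k))"
  have blk: "concat (map (\<lambda>j. s ((j + 0) mod k) (y0 j)) [i*k..<i*k+k]) = sub s k (b i)" for i
  proof -
    have "[i*k..<i*k+k] = map (\<lambda>t. t + i*k) [0..<k]" by (simp add: map_add_upt add.commute)
    then have "concat (map (\<lambda>j. s ((j + 0) mod k) (y0 j)) [i*k..<i*k+k])
        = concat (map (\<lambda>t. s ((t + i*k) mod k) (y0 (t + i*k))) [0..<k])" by (simp add: comp_def)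
    also have "\<dots> = concat (map (\<lambda>t. s (t mod k) (b i ! t)) [0..<k])"
      by (intro arg_cong[where f=concat] map_cong) (auto simp: y0_def assms(2))
    also have "\<dots> = sub s k (b i)" unfolding sub_def using b by simp
    finally show ?thesis .
  qed
  have y0z: "isubp s k 0 y0 = z"
    unfolding isubp_def z by (subst iconcat_group[OF assms(2)]) (simp only: blk)
  define r' where "r' = r mod k"
  have r'k: "r' < k" using assms(2) by (simp add: r'_def)
  define e where "e = eblock s k"
  have le: "length e = k" using eblock_props[OF assms(1)] by (simp add: e_def)
  define y where "y = pre (drop r' e) y0"
  have "isubp s k r y = pre (subp s k r (drop r' e)) (isubp s k (r + (k - r')) y0)"
    unfolding y_def using isubp_pre le by simp
  moreover have "subp s k r (drop r' e) = []"
  proof -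
    have "\<forall>j<k - r'. s ((j + r) mod k) (drop r' e ! j) = []"
    proof (intro allI impI)
      fix j assume j: "j < k - r'"
      have "j + r = (j + r') + (r div k) * k" by (simp add: r'_def)
      then have "(j + r) mod k = j + r'" using j by (metis mod_mult_self1 mod_less less_diff_conv)
      moreover have "drop r' e ! j = e ! (j + r')" using j le r'k by (simp add: add.commute)
      ultimately show "s ((j + r) mod k) (drop r' e ! j) = []"
        using eblock_comp[OF assms(1), of "j + r'"] j by (simp add: e_def)
    qed
    then show ?thesis unfolding subp_def using le by simp
  qed
  moreover have "isubp s k (r + (k - r')) = isubp s k 0"
  proof (rule isubp_mod)
    have "r = r div k * k + r'" by (simp add: r'_def)
    then have "r + (k - r') = (r div k + 1) * k" using r'k by (metis add.commute add_diff_inverse_nat add_mult_distrib group_cancel.add1 mult_1 not_less_iff_gr_or_eq order_less_imp_le add_diff_assoc)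
    then show "(r + (k - r')) mod k = 0 mod k" by simp
  qed
  ultimately have "isubp s k r y = z" using y0z by simp
  moreover have "\<not> EP y" using EP_isubp[OF assms(2), of y s r] assms(4) calculation by auto
  ultimately show ?thesis by blast
qed

lemma sub_Nil: "sub s k [] = []" by (simp add: sub_def)

lemma step_lemma:
  assumes "erasing s k" "k > 0" "optimal s k"
  shows "\<forall>w z. (sub s k ^^ m) w = [] \<longrightarrow> \<not> EP z \<longrightarrow>
    (\<exists>y. (isub s k ^^ m) (pre w y) = z \<and> (\<forall>i\<le>m. \<not> EP ((isub s k ^^ i) (pre w y))))"
proof (induction m)
  case 0 then show ?case by auto
next
  case (Suc m)
  show ?case
  proof (intro allI impI)
    fix w z assume w: "(sub s k ^^ Suc m) w = []" and z: "\<not> EP z"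
    have "(sub s k ^^ m) (sub s k w) = []" using w by (simp add: funpow_Suc_right del: funpow.simps)
    then obtain y' where y': "(isub s k ^^ m) (pre (sub s k w) y') = z"
      "\<forall>i\<le>m. \<not> EP ((isub s k ^^ i) (pre (sub s k w) y'))" using Suc.IH z by blast
    have "\<not> EP y'" using y'(2) EP_pre[of y' "sub s k w"] by auto
    then obtain y where y: "isubp s k (length w) y = y'" "\<not> EP y"
      using preimage[OF assms] by blast
    have T1: "isub s k (pre w y) = pre (sub s k w) y'"
      unfolding isub_p sub_p using isubp_pre[of s k 0 w y] y(1) by simp
    have "(isub s k ^^ Suc m) (pre w y) = z" using y'(1) T1
      by (simp add: funpow_Suc_right del: funpow.simps)
    moreover have "\<forall>i\<le>Suc m. \<not> EP ((isub s k ^^ i) (pre w y))"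
    proof (intro allI impI)
      fix i assume i: "i \<le> Suc m"
      show "\<not> EP ((isub s k ^^ i) (pre w y))"
      proof (cases i)
        case 0 then show ?thesis using y(2) EP_pre_rev[of w y] by auto
      next
        case (Suc i')
        then have "(isub s k ^^ i) (pre w y) = (isub s k ^^ i') (pre (sub s k w) y')"
          using T1 by (simp add: funpow_Suc_right del: funpow.simps)
        then show ?thesis using y'(2) i Suc by simp
      qed
    qed
    ultimately show "\<exists>y. (isub s k ^^ Suc m) (pre w y) = z \<and> (\<forall>i\<le>Suc m. \<not> EP ((isub s k ^^ i) (pre w y)))"
      by blast
  qed
qed

lemma rounds_lemma:
  assumes "erasing s k" "k > 0" "optimal s k"
  shows "\<forall>w\<in>set ws. (sub s k ^^ m) w = [] \<Longrightarrow>
    \<exists>x. (\<forall>i\<le>m * length ws. \<not> EP ((isub s k ^^ i) x)) \<and>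
        (\<forall>j<length ws. \<forall>t<length (ws!j). (isub s k ^^ (j * m)) x t = ws!j!t)"
proof (induction ws)
  case Nil
  show ?case using NEP_witness by (intro exI[of _ "\<lambda>n. \<exists>m. n = 2 ^ m"]) auto
next
  case (Cons w ws)
  then obtain x' where x': "\<forall>i\<le>m * length ws. \<not> EP ((isub s k ^^ i) x')"
    "\<forall>j<length ws. \<forall>t<length (ws!j). (isub s k ^^ (j * m)) x' t = ws!j!t" by auto
  have "\<not> EP x'" using x'(1) by auto
  moreover have "(sub s k ^^ m) w = []" using Cons.prems by simp
  ultimately obtain y where y: "(isub s k ^^ m) (pre w y) = x'"
    "\<forall>i\<le>m. \<not> EP ((isub s k ^^ i) (pre w y))" using step_lemma[OF assms, of m] by blast
  define x where "x = pre w y"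
  have shift: "(isub s k ^^ (i + m)) x = (isub s k ^^ i) x'" for i
    using y(1) by (simp add: funpow_add x_def)
  have "\<forall>i\<le>m * length (w # ws). \<not> EP ((isub s k ^^ i) x)"
  proof (intro allI impI)
    fix i assume i: "i \<le> m * length (w # ws)"
    show "\<not> EP ((isub s k ^^ i) x)"
    proof (cases "i \<le> m")
      case True then show ?thesis using y(2) by (simp add: x_def)
    next
      case False
      then obtain i'' where i'': "i = i'' + m" by (metis add.commute le_add_diff_inverse nat_le_linear)
      then have "i'' \<le> m * length ws" using i by simp
      then show ?thesis using x'(1) shift i'' by simp
    qed
  qed
  moreover have "\<forall>j<length (w # ws). \<forall>t<length ((w # ws)!j). (isub s k ^^ (j * m)) x t = (w # ws)!j!t"
  proof (intro allI impI)
    fix j t assume j: "j < length (w # ws)" and t: "t < length ((w # ws)!j)"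
    show "(isub s k ^^ (j * m)) x t = (w # ws)!j!t"
    proof (cases j)
      case 0 then show ?thesis using t by (simp add: x_def pre_def)
    next
      case (Suc j')
      have "j * m = j' * m + m" using Suc by simp
      then have "(isub s k ^^ (j * m)) x = (isub s k ^^ (j' * m)) x'" using shift by metis
      then show ?thesis using x'(2) j t Suc by simp
    qed
  qed
  ultimately show ?case by blast
qed



lemma floor_close: assumes "\<lfloor>u::real\<rfloor> = \<lfloor>v\<rfloor>" shows "\<bar>u - v\<bar> < 1"
proof -
  have "of_int \<lfloor>u\<rfloor> \<le> u" "u < of_int \<lfloor>u\<rfloor> + 1" "of_int \<lfloor>v\<rfloor> \<le> v" "v < of_int \<lfloor>v\<rfloor> + 1"
    by (auto simp: floor_correct)
  then show ?thesis using assms by linarith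
qed

lemma iter_range:
  fixes f :: "real \<Rightarrow> real"
  assumes "\<forall>x. 0 \<le> f x \<and> f x \<le> (1::real)" "0 \<le> x" "x \<le> 1"
  shows "0 \<le> (f ^^ i) x \<and> (f ^^ i) x \<le> 1"
proof (cases i)
  case 0 then show ?thesis using assms by (simp add: funpow_0)
next
  case (Suc j)
  have "(f ^^ i) x = f ((f ^^ j) x)" using Suc by simp
  then show ?thesis using assms(1) by metis
qed

lemma sep_bdd:
  assumes "\<forall>x. 0 \<le> f x \<and> f x \<le> (1::real)" "0 < \<delta>"
  shows "bdd_above {card S | S. finite S \<and> separated f n \<delta> S}"
proof -
  define K where "K = nat \<lfloor>1 / \<delta>\<rfloor>"
  define L where "L = {xs. set xs \<subseteq> {0..K} \<and> length xs = Suc n}"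
  have finL: "finite L" unfolding L_def by (rule finite_lists_length_eq) simp
  define g where "g x = map (\<lambda>i. nat \<lfloor>(f ^^ i) x / \<delta>\<rfloor>) [0..<Suc n]" for x
  have "card S \<le> card L" if S: "finite S" "separated f n \<delta> S" for S
  proof -
    have S01: "\<forall>x\<in>S. 0 \<le> x \<and> x \<le> 1" using S(2) unfolding separated_def by auto
    have gL: "g ` S \<subseteq> L"
    proof
      fix z assume "z \<in> g ` S"
      then obtain x where x: "x \<in> S" "z = g x" by blast
      have "nat \<lfloor>(f ^^ i) x / \<delta>\<rfloor> \<le> K" for i
      proof -
        have "(f ^^ i) x \<le> 1" using iter_range[OF assms(1)] S01 x(1) by blast
        then have "(f ^^ i) x / \<delta> \<le> 1 / \<delta>" using assms(2) by (simp add: divide_right_mono)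
        then show ?thesis unfolding K_def by (intro nat_mono floor_mono)
      qed
      then show "z \<in> L" unfolding L_def x(2) g_def by auto
    qed
    have "inj_on g S"
    proof (rule inj_onI, rule ccontr)
      fix x y assume xy: "x \<in> S" "y \<in> S" "g x = g y" "x \<noteq> y"
      have dn: "dn f n x y \<ge> \<delta>" using S(2) xy unfolding separated_def by blast
      have "\<forall>a\<in>(\<lambda>i. \<bar>(f ^^ i) x - (f ^^ i) y\<bar>) ` {0..n}. a < \<delta>"
      proof
        fix a assume "a \<in> (\<lambda>i. \<bar>(f ^^ i) x - (f ^^ i) y\<bar>) ` {0..n}"
        then obtain i where i: "i \<le> n" "a = \<bar>(f ^^ i) x - (f ^^ i) y\<bar>" by auto
        have "g x ! i = g y ! i" using xy by simp
        then have "nat \<lfloor>(f ^^ i) x / \<delta>\<rfloor> = nat \<lfloor>(f ^^ i) y / \<delta>\<rfloor>" using i(1) by (simp add: g_def nth_map_upt del: upt_Suc)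
        moreover have "0 \<le> (f ^^ i) x" "0 \<le> (f ^^ i) y" using iter_range[OF assms(1)] S01 xy by blast+
        ultimately have "\<lfloor>(f ^^ i) x / \<delta>\<rfloor> = \<lfloor>(f ^^ i) y / \<delta>\<rfloor>" using assms(2)
          by (subst (asm) eq_nat_nat_iff) auto
        then have "\<bar>(f ^^ i) x / \<delta> - (f ^^ i) y / \<delta>\<bar> < 1" by (rule floor_close)
        then have "\<bar>(f ^^ i) x - (f ^^ i) y\<bar> / \<delta> < 1" using assms(2)
          by (simp add: diff_divide_distrib[symmetric])
        then show "a < \<delta>" using i(2) assms(2) by (simp add: divide_less_eq)
      qed
      then have "dn f n x y < \<delta>" unfolding dn_def by (subst Max_less_iff) auto
      then show False using dn by simp
    qed
    then have "card S = card (g ` S)" by (simp add: card_image)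
    also have "\<dots> \<le> card L" by (rule card_mono[OF finL gL])
    finally show ?thesis .
  qed
  then show ?thesis unfolding bdd_above_def by blast
qed

lemma sep_num_ge:
  assumes "\<forall>x. 0 \<le> f x \<and> f x \<le> (1::real)" "0 < \<delta>" "finite S" "separated f n \<delta> S"
  shows "card S \<le> sep_num f n \<delta>"
  unfolding sep_num_def by (rule cSup_upper) (use assms sep_bdd in auto)

lemma dn_ge:
  assumes "i \<le> n" shows "\<bar>(f ^^ i) x - (f ^^ i) y\<bar> \<le> dn f n x y"
  unfolding dn_def using assms by (intro Max_ge) auto

lemma word_sep:
  assumes "length a = p" "length a' = p" "a \<noteq> a'"
    "\<forall>t<Suc p. u t = (a @ [False]) ! t" "\<forall>t<Suc p. u' t = (a' @ [False]) ! t"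
  shows "1 / 2 ^ Suc p \<le> \<bar>ival u - ival u'\<bar>"
proof -
  have ex: "\<exists>i. i < p \<and> a ! i \<noteq> a' ! i"
  proof (rule ccontr)
    assume "\<not> (\<exists>i. i < p \<and> a ! i \<noteq> a' ! i)"
    then have "a = a'" using assms(1,2) by (intro nth_equalityI) auto
    then show False using assms(3) by simp
  qed
  define i where "i = (LEAST i. i < p \<and> a ! i \<noteq> a' ! i)"
  have i: "i < p" "a ! i \<noteq> a' ! i" using LeastI_ex[OF ex] unfolding i_def by auto
  have below: "a ! n = a' ! n" if n: "n < i" for n
  proof (rule ccontr)
    assume "a ! n \<noteq> a' ! n"
    then have "n < p \<and> a ! n \<noteq> a' ! n" using n i(1) by simp
    then have "i \<le> n" unfolding i_def by (rule Least_le)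
    then show False using n by simp
  qed
  have ua: "\<And>t. t < p \<Longrightarrow> u t = a ! t" "\<And>t. t < p \<Longrightarrow> u' t = a' ! t"
    using assms(1,2,4,5) by (auto simp: nth_append)
  have up: "\<not> u p" "\<not> u' p" using assms(1,2,4,5) by (auto simp: nth_append)
  have agree: "\<And>n. n < i \<Longrightarrow> u n = u' n" using below ua i(1) by simp
  have uiu: "u i \<noteq> u' i" using ua i by simp
  show ?thesis
  proof (cases "u i")
    case False
    then have "u' i" using uiu by simp
    then have "1 / 2 ^ Suc p \<le> ival u' - ival u" using ival_sep[of i u u' p] agree False i up by blast
    then show ?thesis by simp
  next
    case True
    then have "\<not> u' i" using uiu by simp
    then have "1 / 2 ^ Suc p \<le> ival u - ival u'" using ival_sep[of i u' u p] agree True i up by metis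
    then show ?thesis by simp
  qed
qed



lemma frange: "\<forall>x. 0 \<le> fsigma s k x \<and> fsigma s k x \<le> 1"
  by (simp add: fsigma_def ival_range)

lemma count_lemma:
  assumes "erasing s k" "k > 0" "optimal s k" "0 < \<delta>" "\<delta> \<le> 1 / 2 ^ Suc p"
    and van: "\<forall>w. length w = Suc p \<longrightarrow> (sub s k ^^ m) w = []"
  shows "2 ^ (p * r) \<le> sep_num (fsigma s k) (r * m) \<delta>"
proof -
  let ?f = "fsigma s k"
  let ?T = "isub s k"
  define A where "A = {a::bool list. set a \<subseteq> UNIV \<and> length a = p}"
  define Ws where "Ws = {as. set as \<subseteq> A \<and> length as = r}"
  define P where "P as x \<longleftrightarrow> (\<forall>i\<le>m * r. \<not> EP ((?T ^^ i) x)) \<and>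
      (\<forall>j<r. \<forall>t<Suc p. (?T ^^ (j * m)) x t = (as ! j @ [False]) ! t)" for as x
  have exP: "\<exists>x. P as x" if as: "as \<in> Ws" for as
  proof -
    define ws where "ws = map (\<lambda>a. a @ [False]) as"
    have lens: "length ws = r" "\<And>j. j < r \<Longrightarrow> ws ! j = as ! j @ [False]"
      "\<And>j. j < r \<Longrightarrow> length (as ! j) = p"
      using as unfolding ws_def Ws_def A_def by (auto dest!: nth_mem)
    have "\<forall>w\<in>set ws. (sub s k ^^ m) w = []"
      using as van unfolding ws_def Ws_def A_def by auto
    then obtain x where x: "\<forall>i\<le>m * length ws. \<not> EP ((?T ^^ i) x)"
      "\<forall>j<length ws. \<forall>t<length (ws!j). (?T ^^ (j * m)) x t = ws!j!t"
      using rounds_lemma[OF assms(1-3)] by blast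
    have "P as x" unfolding P_def using x lens by auto
    then show ?thesis by blast
  qed
  define X where "X as = (SOME x. P as x)" for as
  have PX: "P as (X as)" if "as \<in> Ws" for as unfolding X_def using exP[OF that] by (rule someI_ex)
  define pt where "pt as = ival (X as)" for as
  have iter: "(?f ^^ i) (pt as) = ival ((?T ^^ i) (X as))" if "as \<in> Ws" "i \<le> r * m" for as i
    unfolding pt_def
  proof (rule fsigma_iter[OF assms(1,2)])
    show "\<forall>j<i. infones ((?T ^^ j) (X as))"
      using PX[OF that(1)] that(2) not_EP_infones unfolding P_def by (simp add: mult.commute)
  qed
  have key: "\<delta> \<le> \<bar>(?f ^^ (j * m)) (pt as) - (?f ^^ (j * m)) (pt as')\<bar> \<and> j * m \<le> r * m"
    if "as \<in> Ws" "as' \<in> Ws" "j < r" "as ! j \<noteq> as' ! j" for as as' j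
  proof -
    have jm: "j * m \<le> r * m" using that(3) by simp
    have "as ! j \<in> set as" "as' ! j \<in> set as'" using that unfolding Ws_def by auto
    moreover have "set as \<subseteq> A" "set as' \<subseteq> A" using that by (auto simp: Ws_def)
    ultimately have "as ! j \<in> A" "as' ! j \<in> A" by blast+
    then have la: "length (as ! j) = p" "length (as' ! j) = p" by (auto simp: A_def)
    have "1 / 2 ^ Suc p \<le> \<bar>ival ((?T ^^ (j * m)) (X as)) - ival ((?T ^^ (j * m)) (X as'))\<bar>"
      by (rule word_sep[OF la that(4)]) (use PX[OF that(1)] PX[OF that(2)] that(3) in \<open>auto simp: P_def\<close>)
    then show ?thesis using iter[OF that(1) jm] iter[OF that(2) jm] assms(5) jm by simp
  qed
  have diff: "\<exists>j<r. as ! j \<noteq> as' ! j" if "as \<in> Ws" "as' \<in> Ws" "as \<noteq> as'" for as as'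
  proof (rule ccontr)
    assume "\<not> (\<exists>j<r. as ! j \<noteq> as' ! j)"
    then have "as = as'" using that(1,2) unfolding Ws_def by (intro nth_equalityI) auto
    then show False using that(3) by simp
  qed
  have injpt: "inj_on pt Ws"
  proof (rule inj_onI, rule ccontr)
    fix as as' assume h: "as \<in> Ws" "as' \<in> Ws" "pt as = pt as'" "as \<noteq> as'"
    obtain j where "j < r" "as ! j \<noteq> as' ! j" using diff[OF h(1,2,4)] by blast
    then show False using key[OF h(1,2)] h(3) assms(4) by force
  qed
  define S where "S = pt ` Ws"
  have finA: "finite A" unfolding A_def by (rule finite_lists_length_eq) simp
  have cardA: "card A = 2 ^ p" unfolding A_def
    using card_lists_length_eq[of "UNIV :: bool set" p] by (simp only: card_UNIV_bool) simp
  have finWs: "finite Ws" unfolding Ws_def by (rule finite_lists_length_eq[OF finA])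
  have cardWs: "card Ws = (2 ^ p) ^ r" unfolding Ws_def using card_lists_length_eq[OF finA] cardA by simp
  have cardS: "card S = 2 ^ (p * r)" unfolding S_def using card_image[OF injpt] cardWs
    by (simp add: power_mult)
  have sepS: "separated ?f (r * m) \<delta> S"
    unfolding separated_def
  proof (intro conjI ballI impI)
    show "S \<subseteq> {0..1}" unfolding S_def pt_def using ival_range by auto
  next
    fix x y assume "x \<in> S" "y \<in> S" "x \<noteq> y"
    then obtain as as' where h: "as \<in> Ws" "as' \<in> Ws" "x = pt as" "y = pt as'" "as \<noteq> as'"
      unfolding S_def by auto
    obtain j where "j < r" "as ! j \<noteq> as' ! j" using diff[OF h(1,2,5)] by blast
    then have "\<delta> \<le> \<bar>(?f ^^ (j * m)) x - (?f ^^ (j * m)) y\<bar>" "j * m \<le> r * m"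
      using key[OF h(1,2)] h(3,4) by auto
    then show "\<delta> \<le> dn ?f (r * m) x y" using dn_ge[of "j * m" "r * m" ?f x y] by linarith
  qed
  have "card S \<le> sep_num ?f (r * m) \<delta>"
    by (rule sep_num_ge[OF frange assms(4) _ sepS]) (simp add: S_def finWs)
  then show ?thesis using cardS by simp
qed



lemma sub_pow_Nil: "(sub s k ^^ j) [] = []"
  by (induction j) (simp_all add: sub_Nil)

theorem mainTheorem18:
  fixes s :: "nat \<Rightarrow> bool \<Rightarrow> bool list" and k :: nat
  assumes "k \<ge> 2"
    and "completely_erasing s k"
    and "eblock s k \<noteq> replicate k True"
    and "optimal s k"
    and "\<forall>M>0. \<exists>N. \<forall>w. length w > N \<longrightarrow>
           real (length w) / real (vanishing_order s k w) > M"
  shows "htop (fsigma s k) = \<infinity>"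
proof -
  have kpos: "k > 0" using assms(1) by simp
  have er: "erasing s k" using assms(2) unfolding completely_erasing_def by simp
  have vanish: "\<exists>n. (sub s k ^^ n) w = []" for w using assms(2) unfolding completely_erasing_def by simp
  let ?f = "fsigma s k"
  let ?g = "\<lambda>\<delta>. limsup (\<lambda>n. ereal (ln (real (sep_num ?f n \<delta>)) / real n))"
  have "(?g \<longlongrightarrow> \<infinity>) (at_right 0)"
    unfolding tendsto_PInfty
  proof
    fix B :: real
    define M where "M = 3 * (\<bar>B\<bar> + 1) / ln 2"
    have Mpos: "M > 0" unfolding M_def by simp
    obtain N where N: "\<forall>w. length w > N \<longrightarrow> real (length w) / real (vanishing_order s k w) > M"
      using assms(5) Mpos by blast
    define p where "p = N + nat \<lceil>M\<rceil> + 1"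
    have pN: "N < Suc p" and pM: "M \<le> real p" and p1: "1 \<le> p" unfolding p_def by linarith+
    define m where "m = nat \<lceil>real (Suc p) / M\<rceil>"
    have van: "\<forall>w. length w = Suc p \<longrightarrow> (sub s k ^^ m) w = []"
    proof (intro allI impI)
      fix w :: "bool list" assume lw: "length w = Suc p"
      define e where "e = vanishing_order s k w"
      have ew: "(sub s k ^^ e) w = []" unfolding e_def vanishing_order_def
        by (rule LeastI_ex) (rule vanish)
      have "N < length w" using pN lw by simp
      then have "real (length w) / real e > M" using N unfolding e_def by blast
      then have rat: "real (Suc p) / real e > M" using lw by simp
      then have "e > 0" using Mpos by (cases e) auto
      then have "M * real e < real (Suc p)" using rat by (simp add: pos_less_divide_eq mult.commute)
      then have "real e < real (Suc p) / M" using Mpos by (simp add: pos_less_divide_eq mult.commute)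
      then have "e \<le> m" unfolding m_def by linarith
      then have "(sub s k ^^ m) w = (sub s k ^^ (m - e)) ((sub s k ^^ e) w)"
        by (simp add: funpow_add[symmetric, THEN fun_cong, unfolded comp_def])
      then show "(sub s k ^^ m) w = []" using ew sub_pow_Nil by simp
    qed
    have m1: "1 \<le> m"
    proof -
      have "0 < real (Suc p) / M" using Mpos by simp
      then have "0 < \<lceil>real (Suc p) / M\<rceil>" by simp
      then show ?thesis unfolding m_def by linarith
    qed
    have mle: "real m \<le> real (Suc p) / M + 1" unfolding m_def
      using Mpos by (simp add: of_nat_nat)
    have "real (Suc p) / M + 1 \<le> 3 * real p / M"
    proof -
      have "real (Suc p) + M \<le> 3 * real p" using p1 pM by simp
      then have "(real (Suc p) + M) / M \<le> 3 * real p / M" using Mpos by (intro divide_right_mono) auto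
      moreover have "(real (Suc p) + M) / M = real (Suc p) / M + 1" using Mpos by (simp add: add_divide_distrib)
      ultimately show ?thesis by simp
    qed
    then have "real m \<le> 3 * real p / M" using mle by linarith
    then have rate: "(\<bar>B\<bar> + 1) * real m \<le> real p * ln 2"
      using Mpos unfolding M_def by (simp add: field_simps)
    have "eventually (\<lambda>\<delta>. \<delta> \<in> {0<..<1 / 2 ^ Suc p}) (at_right (0::real))"
      by (rule eventually_at_right_real) simp
    then show "eventually (\<lambda>\<delta>. ereal B < ?g \<delta>) (at_right 0)"
    proof (rule eventually_mono)
      fix \<delta> :: real assume "\<delta> \<in> {0<..<1 / 2 ^ Suc p}"
      then have d: "0 < \<delta>" "\<delta> \<le> 1 / 2 ^ Suc p" by auto
      define X where "X n = ereal (ln (real (sep_num ?f n \<delta>)) / real n)" for n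
      define h where "h r = Suc r * m" for r
      have smh: "strict_mono h" unfolding h_def using m1 by (intro strict_monoI) simp
      have "ereal (\<bar>B\<bar> + 1) \<le> (X \<circ> h) r" for r
      proof -
        have c: "2 ^ (p * Suc r) \<le> sep_num ?f (Suc r * m) \<delta>"
          by (rule count_lemma[OF er kpos assms(4) d van])
        then have "real (2 ^ (p * Suc r)) \<le> real (sep_num ?f (Suc r * m) \<delta>)" by linarith
        moreover have "0 < sep_num ?f (Suc r * m) \<delta>"
          using c by (metis less_le_trans zero_less_numeral zero_less_power)
        ultimately have "ln (real (2 ^ (p * Suc r))) \<le> ln (real (sep_num ?f (Suc r * m) \<delta>))"
          by (subst ln_le_cancel_iff) auto
        then have l: "real (p * Suc r) * ln 2 \<le> ln (real (sep_num ?f (Suc r * m) \<delta>))"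
          by (simp add: ln_realpow)
        have "0 < Suc r * m" using m1 by simp
        then have pos: "0 < real (Suc r * m)" by (simp only: of_nat_0_less_iff)
        have "(\<bar>B\<bar> + 1) * real (Suc r * m) \<le> real (p * Suc r) * ln 2"
          using rate mult_right_mono[OF rate, of "real (Suc r)"] by (simp add: algebra_simps)
        then have "(\<bar>B\<bar> + 1) * real (Suc r * m) \<le> ln (real (sep_num ?f (Suc r * m) \<delta>))" using l by linarith
        then have "\<bar>B\<bar> + 1 \<le> ln (real (sep_num ?f (Suc r * m) \<delta>)) / real (Suc r * m)"
          using pos by (simp add: pos_le_divide_eq)
        then show ?thesis unfolding X_def h_def by simp
      qed
      then have "ereal (\<bar>B\<bar> + 1) \<le> limsup (X \<circ> h)"
        by (intro le_Limsup) auto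
      also have "\<dots> \<le> limsup X" by (rule limsup_subseq_mono[OF smh])
      finally have "ereal (\<bar>B\<bar> + 1) \<le> limsup X" .
      moreover have "ereal B < ereal (\<bar>B\<bar> + 1)" by simp
      ultimately show "ereal B < ?g \<delta>" unfolding X_def by (meson less_le_trans)
    qed
  qed
  then show ?thesis unfolding htop_def by (intro tendsto_Lim) simp_all
qed


end
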